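(* Let $S=\{p,q\}$ be a set of $m=2$ discrete probability distributions, and let $\mathcal G_S$ be the output of the greedy coupling algorithm on $S$. Then $$H(\mathcal G_S)\le H(\textsc{Profile}_S)+\frac{\log_2 e}{e}.$$
   Context: Distributions are finite vectors of nonnegative reals summing to $1$, with states sorted in non-increasing order. Greedy coupling algorithm: maintain the (remaining) masses of the states of each distribution in $S$. Repeatedly: let $r=\min_{p\in S}\max_j p(j)$ (minimum over distributions of their largest remaining state); if $r=0$ stop; otherwise append $r$ as the next state of $\mathcal G_S$ and subtract $r$ from the largest remaining state of every distribution in $S$ (ties broken arbitrarily). $\mathcal G_S$ is the resulting sequence of state masses (a probability distribution, and a valid coupling), with $H(\mathcal G_S)=\sum_t \mathcal G_S(t)\log_2(1/\mathcal G_S(t))$. For a distribution $p$, $\textsc{Sketch}_p:(0,1]\to\mathbb R$ is $\textsc{Sketch}_p(x)=p(i)$ for $x\in(\sum_{j>i}p(j),\sum_{j\ge i}p(j)]$; $\textsc{Profile}_S(x)=\min_{p\in S}\textsc{Sketch}_p(x)$; and $H(\textsc{Profile}_S)=\int_0^{1}\log_2(1/\textsc{Profile}_S(x))\,dx$. *)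

theory Defs
  imports "HOL-Analysis.Analysis"
begin

definition is_distr :: "real list \<Rightarrow> bool" where
  "is_distr p \<longleftrightarrow> (\<forall>x\<in>set p. 0 \<le> x) \<and> sum_list p = 1 \<and> sorted_wrt (\<ge>) p"

text \<open>Ties in choosing the largest
  remaining state are broken arbitrarily (every admissible choice is allowed).\<close>
inductive greedy :: "real list list \<Rightarrow> real list \<Rightarrow> bool" where
  stop: "(MIN p\<in>set S. Max (set p)) = 0 \<Longrightarrow> greedy S []"
| step: "r = (MIN p\<in>set S. Max (set p)) \<Longrightarrow> r \<noteq> 0 \<Longrightarrow>
         list_all2 (\<lambda>p p'. \<exists>i<length p. p ! i = Max (set p) \<and> p' = p[i := p ! i - r]) S S' \<Longrightarrow>
         greedy S' G \<Longrightarrow> greedy S (r # G)"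

definition entropy :: "real list \<Rightarrow> real" where
  "entropy G = sum_list (map (\<lambda>g. g * log 2 (1 / g)) G)"

text \<open>Sketch_p(x) = p(i) for x in (sum_{j>i} p(j), sum_{j>=i} p(j)] (0-indexed).\<close>
definition sketch :: "real list \<Rightarrow> real \<Rightarrow> real" where
  "sketch p x = p ! (THE i. i < length p \<and> sum_list (drop (Suc i) p) < x \<and> x \<le> sum_list (drop i p))"

definition profile :: "real list set \<Rightarrow> real \<Rightarrow> real" where
  "profile S x = (MIN p\<in>S. sketch p x)"

definition profile_entropy :: "real list set \<Rightarrow> real" where
  "profile_entropy S = integral {0..1} (\<lambda>x. log 2 (1 / profile S x))"

end

theory Submission
  imports Defs
begin


definition Mv :: "real list \<Rightarrow> real \<Rightarrow> real" where
  "Mv xs v = sum_list (map (\<lambda>a. if v \<le> a then a else 0) xs)"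
definition Lf :: "(real \<times> real) list \<Rightarrow> real \<Rightarrow> real" where
  "Lf E v = sum_list (map (\<lambda>(r,\<rho>). if \<rho> < v \<and> v \<le> r then \<rho> else 0) E)"

lemma sum_list_upd: "i < length xs \<Longrightarrow> sum_list (xs[i := y]) = sum_list xs - xs!i + (y::real)"
  by (induction xs arbitrary: i) (auto split: nat.splits)

lemma Mv_upd: "i < length xs \<Longrightarrow> Mv (xs[i:=y]) v = Mv xs v - (if v \<le> xs!i then xs!i else 0) + (if v \<le> y then y else 0)"
  unfolding Mv_def by (simp add: map_update sum_list_upd)

lemma Mv_nonneg: "0 \<le> v \<Longrightarrow> 0 \<le> Mv xs v"
  unfolding Mv_def by (induction xs) auto

lemma Mv_zero: "\<forall>a\<in>set xs. a < v \<Longrightarrow> Mv xs v = 0"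
  unfolding Mv_def by (induction xs) auto

lemma Lf_nonneg: "\<forall>e\<in>set E. 0 \<le> snd e \<Longrightarrow> 0 \<le> Lf E v"
  unfolding Lf_def by (induction E) auto

lemma Mv_Cons: "Mv (a # xs) v = (if v \<le> a then a else 0) + Mv xs v"
  unfolding Mv_def by simp

lemma Lf_Cons: "Lf ((r,\<rho>) # E) v = (if \<rho> < v \<and> v \<le> r then \<rho> else 0) + Lf E v"
  unfolding Lf_def by simp

lemma key_step:
  fixes A B :: "real list"
  assumes nA: "A \<noteq> []" and nB: "B \<noteq> []" and v: "0 < v"
    and i: "i < length A" "A!i = Max (set A)" and j: "j < length B" "B!j = Max (set B)"
    and r: "r = min (Max (set A)) (Max (set B))"
    and nnA: "\<forall>a\<in>set A. 0 \<le> a" and nnB: "\<forall>b\<in>set B. 0 \<le> b"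
  shows "min (Mv A v) (Mv B v) \<le> min (Mv (A[i := A!i - r]) v) (Mv (B[j := B!j - r]) v)
      + (if v \<le> r then r else 0) + (if \<bar>Max (set A) - Max (set B)\<bar> < v \<and> v \<le> r then \<bar>Max (set A) - Max (set B)\<bar> else 0)"
proof -
  define a where "a = Max (set A)"
  define b where "b = Max (set B)"
  have eA: "Mv (A[i := A!i - r]) v = Mv A v - (if v \<le> a then a else 0) + (if v \<le> a - r then a - r else 0)"
    using Mv_upd[OF i(1)] i(2) a_def by simp
  have eB: "Mv (B[j := B!j - r]) v = Mv B v - (if v \<le> b then b else 0) + (if v \<le> b - r then b - r else 0)"
    using Mv_upd[OF j(1)] j(2) b_def by simp
  have a0: "Mv A v = 0" if "a < v"
    using that nA by (intro Mv_zero) (auto simp: a_def)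
  have b0: "Mv B v = 0" if "b < v"
    using that nB by (intro Mv_zero) (auto simp: b_def)
  have p1: "0 \<le> Mv (A[i := A!i - r]) v" "0 \<le> Mv (B[j := B!j - r]) v"
    using v by (auto intro: Mv_nonneg)
  show ?thesis
  proof (cases "v \<le> r")
    case False
    then have "a < v \<or> b < v" using r a_def b_def by auto
    then have "min (Mv A v) (Mv B v) \<le> 0" using a0 b0 by auto
    then show ?thesis using p1 False by auto
  next
    case True
    then show ?thesis using eA eB r unfolding a_def[symmetric] b_def[symmetric]
      by (auto split: if_splits simp: min_def abs_if)
  qed
qed

lemma greedy_level:
  assumes "greedy S G"
  shows "S = [A,B] \<Longrightarrow> A \<noteq> [] \<Longrightarrow> B \<noteq> [] \<Longrightarrow> (\<forall>a\<in>set A. 0 \<le> a) \<Longrightarrow> (\<forall>b\<in>set B. 0 \<le> b) \<Longrightarrow>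
    \<exists>E. map fst E = G \<and> (\<forall>e\<in>set E. 0 \<le> snd e) \<and> (\<forall>v>0. min (Mv A v) (Mv B v) \<le> Mv G v + Lf E v)"
  using assms
proof (induction arbitrary: A B rule: greedy.induct)
  case (stop S)
  then have "min (Max (set A)) (Max (set B)) = 0" by simp
  then have "Max (set A) = 0 \<or> Max (set B) = 0" by (auto simp: min_def split: if_splits)
  moreover have "Mv A v = 0" if "Max (set A) = 0" "v > 0" for v
  proof (intro Mv_zero ballI)
    fix a assume "a \<in> set A" then have "a \<le> Max (set A)" by simp
    then show "a < v" using that by linarith
  qed
  moreover have "Mv B v = 0" if "Max (set B) = 0" "v > 0" for v
  proof (intro Mv_zero ballI)
    fix a assume "a \<in> set B" then have "a \<le> Max (set B)" by simp
    then show "a < v" using that by linarith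
  qed
  ultimately show ?case
    by (intro exI[of _ "[]"]) (auto simp: Mv_def Lf_def)
next
  case (step r S S' G)
  from step.prems(1) step.hyps(3) obtain A' B' where S': "S' = [A', B']"
    and hA: "\<exists>i<length A. A ! i = Max (set A) \<and> A' = A[i := A ! i - r]"
    and hB: "\<exists>j<length B. B ! j = Max (set B) \<and> B' = B[j := B ! j - r]"
    by (auto simp: list_all2_Cons1)
  from hA obtain i where i: "i < length A" "A ! i = Max (set A)" "A' = A[i := A ! i - r]" by blast
  from hB obtain j where j: "j < length B" "B ! j = Max (set B)" "B' = B[j := B ! j - r]" by blast
  have r: "r = min (Max (set A)) (Max (set B))" using step by simp
  have nnA': "\<forall>a\<in>set A'. 0 \<le> a"
  proof
    fix x assume "x \<in> set A'"
    then have "x \<in> insert (A!i - r) (set A)" using i set_update_subset_insert by fastforce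
    then show "0 \<le> x" using r i step.prems by auto
  qed
  have nnB': "\<forall>a\<in>set B'. 0 \<le> a"
  proof
    fix x assume "x \<in> set B'"
    then have "x \<in> insert (B!j - r) (set B)" using j set_update_subset_insert by fastforce
    then show "0 \<le> x" using r j step.prems by auto
  qed
  have "A' \<noteq> []" "B' \<noteq> []" using i j step.prems by auto
  from step.IH[OF S' this nnA' nnB'] obtain E' where
    E': "map fst E' = G" "\<forall>e\<in>set E'. 0 \<le> snd e" "\<forall>v>0. min (Mv A' v) (Mv B' v) \<le> Mv G v + Lf E' v"
    by blast
  define \<rho> where "\<rho> = \<bar>Max (set A) - Max (set B)\<bar>"
  show ?case
  proof (intro exI[of _ "(r, \<rho>) # E'"] conjI allI impI)
    show "map fst ((r, \<rho>) # E') = r # G" using E' by simp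
    show "\<forall>e\<in>set ((r, \<rho>) # E'). 0 \<le> snd e" using E' by (auto simp: \<rho>_def)
    fix v :: real assume v: "0 < v"
    have "min (Mv A v) (Mv B v) \<le> min (Mv A' v) (Mv B' v)
      + (if v \<le> r then r else 0) + (if \<rho> < v \<and> v \<le> r then \<rho> else 0)"
      unfolding i(3) j(3) \<rho>_def by (rule key_step[OF step.prems(2,3) v i(1,2) j(1,2) r step.prems(4,5)])
    then show "min (Mv A v) (Mv B v) \<le> Mv (r # G) v + Lf ((r, \<rho>) # E') v"
      using E'(3)[rule_format, OF v] v by (simp add: Mv_Cons Lf_Cons split: if_splits)
  qed
qed



lemma sum_list_zero: "\<forall>a\<in>set xs. a = 0 \<Longrightarrow> sum_list xs = (0::real)"
  by (induction xs) auto

lemma greedy_sum: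
  assumes "greedy S G"
  shows "S = [A,B] \<Longrightarrow> A \<noteq> [] \<Longrightarrow> B \<noteq> [] \<Longrightarrow> (\<forall>a\<in>set A. 0 \<le> a) \<Longrightarrow> (\<forall>b\<in>set B. 0 \<le> b) \<Longrightarrow>
    sum_list A = sum_list B \<Longrightarrow> sum_list G = sum_list A \<and> (\<forall>g\<in>set G. 0 < g \<and> g \<le> sum_list A)"
  using assms
proof (induction arbitrary: A B rule: greedy.induct)
  case (stop S)
  then have "min (Max (set A)) (Max (set B)) = 0" by simp
  then have "Max (set A) = 0 \<or> Max (set B) = 0" by (auto simp: min_def split: if_splits)
  moreover have "sum_list A = 0" if "Max (set A) = 0"
  proof -
    have "\<forall>a\<in>set A. a = 0"
    proof
      fix a assume "a \<in> set A" then have "a \<le> Max (set A)" "0 \<le> a" using stop by auto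
      then show "a = 0" using that by linarith
    qed
    then show ?thesis by (rule sum_list_zero)
  qed
  moreover have "sum_list B = 0" if "Max (set B) = 0"
  proof -
    have "\<forall>a\<in>set B. a = 0"
    proof
      fix a assume "a \<in> set B" then have "a \<le> Max (set B)" "0 \<le> a" using stop by auto
      then show "a = 0" using that by linarith
    qed
    then show ?thesis by (rule sum_list_zero)
  qed
  ultimately show ?case using stop by auto
next
  case (step r S S' G)
  from step.prems(1) step.hyps(3) obtain A' B' where S': "S' = [A', B']"
    and hA: "\<exists>i<length A. A ! i = Max (set A) \<and> A' = A[i := A ! i - r]"
    and hB: "\<exists>j<length B. B ! j = Max (set B) \<and> B' = B[j := B ! j - r]"
    by (auto simp: list_all2_Cons1)
  from hA obtain i where i: "i < length A" "A ! i = Max (set A)" "A' = A[i := A ! i - r]" by blast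
  from hB obtain j where j: "j < length B" "B ! j = Max (set B)" "B' = B[j := B ! j - r]" by blast
  have r: "r = min (Max (set A)) (Max (set B))" using step by simp
  have nnA': "\<forall>a\<in>set A'. 0 \<le> a"
  proof
    fix x assume "x \<in> set A'"
    then have "x \<in> insert (A!i - r) (set A)" using i set_update_subset_insert by fastforce
    then show "0 \<le> x" using r i step.prems by auto
  qed
  have nnB': "\<forall>a\<in>set B'. 0 \<le> a"
  proof
    fix x assume "x \<in> set B'"
    then have "x \<in> insert (B!j - r) (set B)" using j set_update_subset_insert by fastforce
    then show "0 \<le> x" using r j step.prems by auto
  qed
  have sA: "sum_list A' = sum_list A - r" using i sum_list_upd[OF i(1)] by simp
  have sB: "sum_list B' = sum_list B - r" using j sum_list_upd[OF j(1)] by simp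
  have "A' \<noteq> []" "B' \<noteq> []" using i j step.prems by auto
  from step.IH[OF S' this nnA' nnB'] sA sB step.prems(6)
  have IH: "sum_list G = sum_list A - r" "\<forall>g\<in>set G. 0 < g \<and> g \<le> sum_list A - r" by auto
  have "Max (set A) \<in> set A" "Max (set B) \<in> set B" using step.prems by auto
  then have "0 \<le> Max (set A)" "0 \<le> Max (set B)"
    using step.prems by auto
  have "Max (set A) \<le> sum_list A"
    by (rule member_le_sum_list) (use \<open>Max (set A) \<in> set A\<close> step.prems in auto)
  then have "0 < r" "r \<le> sum_list A" using r step.hyps(2) \<open>0 \<le> Max (set A)\<close> \<open>0 \<le> Max (set B)\<close> by auto
  then show ?case using IH by auto
qed



lemma Mv_append: "Mv (xs @ ys) v = Mv xs v + Mv ys v"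
  unfolding Mv_def by simp

lemma Mv_all_ge: "\<forall>a\<in>set xs. v \<le> a \<Longrightarrow> Mv xs v = sum_list xs"
  unfolding Mv_def by (induction xs) auto

lemma Mv_le_sum: "\<forall>a\<in>set xs. 0 \<le> a \<Longrightarrow> Mv xs v \<le> sum_list xs"
  unfolding Mv_def by (induction xs) auto

lemma sum_drop_mono:
  fixes p :: "real list"
  assumes "\<forall>a\<in>set p. 0 \<le> a" "i \<le> j"
  shows "sum_list (drop j p) \<le> sum_list (drop i p)"
proof -
  have "drop i p = take (j - i) (drop i p) @ drop (j - i) (drop i p)" by (rule append_take_drop_id[symmetric])
  then have "sum_list (drop i p) = sum_list (take (j - i) (drop i p)) + sum_list (drop j p)"
    using assms(2) by (metis drop_drop le_add_diff_inverse2 sum_list_append)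
  moreover have "0 \<le> sum_list (take (j - i) (drop i p))"
    using assms(1) by (intro sum_list_nonneg) (auto dest: in_set_takeD in_set_dropD)
  ultimately show ?thesis by linarith
qed

lemma sketch_exists:
  fixes p :: "real list"
  shows "0 < x \<Longrightarrow> x \<le> sum_list p \<Longrightarrow> \<exists>i<length p. sum_list (drop (Suc i) p) < x \<and> x \<le> sum_list (drop i p)"
proof (induction p)
  case Nil
  then show ?case by simp
next
  case (Cons a p)
  show ?case
  proof (cases "sum_list p < x")
    case True
    then show ?thesis using Cons.prems by (intro exI[of _ 0]) auto
  next
    case False
    then obtain i where "i < length p" "sum_list (drop (Suc i) p) < x" "x \<le> sum_list (drop i p)"
      using Cons by auto
    then show ?thesis by (intro exI[of _ "Suc i"]) auto
  qed
qed

lemma sketch_eq: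
  fixes p :: "real list"
  assumes nn: "\<forall>a\<in>set p. 0 \<le> a" and i: "i < length p" "sum_list (drop (Suc i) p) < x" "x \<le> sum_list (drop i p)"
  shows "sketch p x = p ! i"
proof -
  have "(THE i. i < length p \<and> sum_list (drop (Suc i) p) < x \<and> x \<le> sum_list (drop i p)) = i"
  proof (rule the_equality)
    show "i < length p \<and> sum_list (drop (Suc i) p) < x \<and> x \<le> sum_list (drop i p)" using i by simp
  next
    fix j assume j: "j < length p \<and> sum_list (drop (Suc j) p) < x \<and> x \<le> sum_list (drop j p)"
    show "j = i"
    proof (rule ccontr)
      assume "j \<noteq> i"
      then have "Suc j \<le> i \<or> Suc i \<le> j" by auto
      then show False
      proof
        assume "Suc j \<le> i"
        then have "sum_list (drop i p) \<le> sum_list (drop (Suc j) p)" using sum_drop_mono[OF nn] by blast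
        then show False using i j by linarith
      next
        assume "Suc i \<le> j"
        then have "sum_list (drop j p) \<le> sum_list (drop (Suc i) p)" using sum_drop_mono[OF nn] by blast
        then show False using i j by linarith
      qed
    qed
  qed
  then show ?thesis unfolding sketch_def by simp
qed

lemma sketch_props:
  fixes p :: "real list"
  assumes d: "is_distr p" and x: "0 < x" "x \<le> 1" and v: "0 < v"
  shows "0 < sketch p x" "sketch p x \<le> 1" "v \<le> sketch p x \<longleftrightarrow> 1 - Mv p v < x"
proof -
  have nn: "\<forall>a\<in>set p. 0 \<le> a" and s1: "sum_list p = 1" and so: "sorted_wrt (\<ge>) p"
    using d unfolding is_distr_def by auto
  obtain i where i: "i < length p" "sum_list (drop (Suc i) p) < x" "x \<le> sum_list (drop i p)"
    using sketch_exists[of x p] x s1 by auto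
  have sk: "sketch p x = p ! i" by (rule sketch_eq[OF nn i])
  have dr: "drop i p = p ! i # drop (Suc i) p" using i(1) by (simp add: Cons_nth_drop_Suc)
  then have Si: "sum_list (drop i p) = p ! i + sum_list (drop (Suc i) p)" by simp
  show "0 < sketch p x" using sk Si i by linarith
  have "p ! i \<in> set p" using i by simp
  then show "sketch p x \<le> 1" using sk s1 nn by (metis member_le_sum_list)
  have tk: "sum_list (take n p) + sum_list (drop n p) = 1" for n
    using s1 by (metis append_take_drop_id sum_list_append)
  have ge: "p ! i \<le> a" if aa: "a \<in> set (take (Suc i) p)" for a
  proof -
    obtain k where k: "k < length (take (Suc i) p)" "a = take (Suc i) p ! k"
      using aa unfolding in_set_conv_nth by metis
    then have "k \<le> i" "k < length p" "a = p ! k" by auto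
    then show ?thesis using so i(1)
      by (cases "k = i") (auto simp: sorted_wrt_iff_nth_less)
  qed
  have le: "a \<le> p ! i" if aa: "a \<in> set (drop i p)" for a
  proof -
    obtain k where k: "k < length (drop i p)" "a = drop i p ! k"
      using aa unfolding in_set_conv_nth by metis
    then have "i + k < length p" "a = p ! (i + k)" by auto
    then show ?thesis using so i(1)
      by (cases "k = 0") (auto simp: sorted_wrt_iff_nth_less)
  qed
  show "v \<le> sketch p x \<longleftrightarrow> 1 - Mv p v < x"
  proof
    assume "v \<le> sketch p x"
    then have "\<forall>a\<in>set (take (Suc i) p). v \<le> a" using ge sk by force
    then have "Mv (take (Suc i) p) v = sum_list (take (Suc i) p)" by (rule Mv_all_ge)
    moreover have "0 \<le> Mv (drop (Suc i) p) v" using v by (intro Mv_nonneg) auto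
    moreover have "Mv p v = Mv (take (Suc i) p) v + Mv (drop (Suc i) p) v"
      by (metis append_take_drop_id Mv_append)
    ultimately show "1 - Mv p v < x" using tk[of "Suc i"] i by linarith
  next
    assume a: "1 - Mv p v < x"
    show "v \<le> sketch p x"
    proof (rule ccontr)
      assume "\<not> v \<le> sketch p x"
      then have "\<forall>a\<in>set (drop i p). a < v" using le sk by force
      then have "Mv (drop i p) v = 0" by (rule Mv_zero)
      moreover have "Mv (take i p) v \<le> sum_list (take i p)"
        using nn by (intro Mv_le_sum) (auto dest: in_set_takeD)
      moreover have "Mv p v = Mv (take i p) v + Mv (drop i p) v"
        by (metis append_take_drop_id Mv_append)
      ultimately show False using tk[of i] i a by linarith
    qed
  qed
qed

definition mm :: "real list \<Rightarrow> real list \<Rightarrow> real \<Rightarrow> real" where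
  "mm p q v = min (Mv p v) (Mv q v)"

lemma profile_props:
  assumes "is_distr p" "is_distr q" and x: "0 < x" "x \<le> 1"
  shows "0 < profile {p,q} x" "profile {p,q} x \<le> 1"
    "\<And>v. 0 < v \<Longrightarrow> v \<le> profile {p,q} x \<longleftrightarrow> 1 - mm p q v < x"
proof -
  have pr: "profile {p,q} x = min (sketch p x) (sketch q x)"
    unfolding profile_def by (cases "p = q") auto
  have v1: "0 < sketch p x" "sketch p x \<le> 1" "0 < sketch q x" "sketch q x \<le> 1"
    using sketch_props[OF assms(1) x zero_less_one] sketch_props[OF assms(2) x zero_less_one] by auto
  show "0 < profile {p,q} x" "profile {p,q} x \<le> 1" using pr v1 by auto
  fix v :: real assume v: "0 < v"
  show "v \<le> profile {p,q} x \<longleftrightarrow> 1 - mm p q v < x"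
    using sketch_props(3)[OF assms(1) x v] sketch_props(3)[OF assms(2) x v] pr
    unfolding mm_def by auto
qed



lemma I1:
  fixes a b :: real
  assumes a: "0 < a" and ab: "a \<le> b"
  shows "(\<integral>\<^sup>+v. ennreal (indicator {a<..b} v / v) \<partial>lborel) = ennreal (ln b - ln a)"
proof -
  have "((\<lambda>v. 1 / v) has_integral (ln b - ln a)) {a..b}"
  proof (rule fundamental_theorem_of_calculus[OF ab])
    fix x assume x: "x \<in> {a..b}"
    then have "0 < x" using a by auto
    then show "(ln has_vector_derivative 1 / x) (at x within {a..b})"
      unfolding has_real_derivative_iff_has_vector_derivative [symmetric]
      by (auto intro!: derivative_eq_intros)
  qed
  then have "integral\<^sup>N lborel (\<lambda>x. ennreal (indicator {a..b} x * (1 / x))) = ennreal (ln b - ln a)"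
    using a by (intro nn_integral_has_integral_lebesgue) auto
  moreover have "(\<integral>\<^sup>+v. ennreal (indicator {a<..b} v / v) \<partial>lborel) =
      integral\<^sup>N lborel (\<lambda>x. ennreal (indicator {a..b} x * (1 / x)))"
    by (intro nn_integral_cong_AE eventually_mono[OF AE_lborel_singleton[of a]])
       (auto simp: indicator_def)
  ultimately show ?thesis by simp
qed

lemma meas_lt_sum[measurable]: "(\<lambda>v. sum_list (map (\<lambda>g. if g < v then g else (0::real)) G)) \<in> borel_measurable borel"
proof (induction G)
  case Nil then show ?case by simp
next
  case (Cons g G)
  have "(\<lambda>v. if g < v then g else (0::real)) \<in> borel_measurable borel" by measurable
  then show ?case using Cons by simp
qed

lemma meas_Lf[measurable]: "(\<lambda>v. Lf E v) \<in> borel_measurable borel"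
proof (induction E)
  case Nil then show ?case by (simp add: Lf_def)
next
  case (Cons e E)
  obtain r \<rho> where e: "e = (r, \<rho>)" by fastforce
  have "(\<lambda>v. if \<rho> < v \<and> v \<le> r then \<rho> else (0::real)) \<in> borel_measurable borel" by measurable
  then show ?case using Cons by (simp add: e Lf_Cons)
qed

lemma meas_Mv[measurable]: "(\<lambda>v. Mv xs v) \<in> borel_measurable borel"
proof (induction xs)
  case Nil then show ?case by (simp add: Mv_def)
next
  case (Cons a xs)
  have "(\<lambda>v. if v \<le> a then a else (0::real)) \<in> borel_measurable borel" by measurable
  then show ?case using Cons by (simp add: Mv_Cons)
qed

lemma meas_mm[measurable]: "(\<lambda>v. mm p q v) \<in> borel_measurable borel"
  unfolding mm_def by measurable

lemma meas_K: "(\<lambda>(x, v). ennreal (indicator {0<..1} x * indicator {0<..1} v * (if x \<le> 1 - mm p q v then 1 else 0) / v))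
   \<in> borel_measurable (lborel \<Otimes>\<^sub>M lborel)"
  by measurable



lemma ind_nonneg: "0 \<le> (t::real) \<Longrightarrow> 0 \<le> indicator {0<..1} v * t / v"
  by (cases "0 < v") (auto simp: indicator_def)

lemma Gside_term:
  fixes g :: real assumes g: "0 < g" "g \<le> 1"
  shows "(\<integral>\<^sup>+v. ennreal (indicator {0<..1} v * (if g < v then g else 0) / v) \<partial>lborel) = ennreal (g * ln (1 / g))"
proof -
  have "(\<integral>\<^sup>+v. ennreal (indicator {0<..1} v * (if g < v then g else 0) / v) \<partial>lborel) =
     (\<integral>\<^sup>+v. ennreal g * ennreal (indicator {g<..1} v / v) \<partial>lborel)"
    using g by (intro nn_integral_cong) (auto simp: indicator_def ennreal_mult[symmetric])
  also have "\<dots> = ennreal g * ennreal (ln 1 - ln g)"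
    using g by (subst nn_integral_cmult) (auto simp: I1)
  also have "\<dots> = ennreal (g * ln (1 / g))"
    using g by (simp add: ennreal_mult[symmetric] ln_div)
  finally show ?thesis .
qed

lemma Gside:
  assumes "\<forall>g\<in>set G. 0 < g \<and> g \<le> 1"
  shows "(\<integral>\<^sup>+v. ennreal (indicator {0<..1} v * sum_list (map (\<lambda>g. if g < v then g else 0) G) / v) \<partial>lborel)
     = ennreal (sum_list (map (\<lambda>g. g * ln (1 / g)) G))"
  using assms
proof (induction G)
  case Nil then show ?case by simp
next
  case (Cons g G)
  have s0: "0 \<le> sum_list (map (\<lambda>g. if g < v then g else 0) G)" for v
    using Cons.prems by (intro sum_list_nonneg) auto
  have t0: "0 \<le> sum_list (map (\<lambda>g. g * ln (1 / g)) G)"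
    using Cons.prems by (intro sum_list_nonneg) (auto intro!: mult_nonneg_nonneg)
  have g0: "0 \<le> g * ln (1 / g)" using Cons.prems by auto
  have "(\<integral>\<^sup>+v. ennreal (indicator {0<..1} v * sum_list (map (\<lambda>g. if g < v then g else 0) (g # G)) / v) \<partial>lborel)
    = (\<integral>\<^sup>+v. ennreal (indicator {0<..1} v * (if g < v then g else 0) / v)
         + ennreal (indicator {0<..1} v * sum_list (map (\<lambda>g. if g < v then g else 0) G) / v) \<partial>lborel)"
  proof (intro nn_integral_cong)
    fix v :: real
    have "indicator {0<..1} v * sum_list (map (\<lambda>g. if g < v then g else 0) (g # G)) / v =
      indicator {0<..1} v * (if g < v then g else 0) / v + indicator {0<..1} v * sum_list (map (\<lambda>g. if g < v then g else 0) G) / v"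
      by (simp add: distrib_left add_divide_distrib)
    moreover have "0 \<le> indicator {0<..1} v * (if g < v then g else 0) / v"
      using Cons.prems by (intro ind_nonneg) auto
    moreover have "0 \<le> indicator {0<..1} v * sum_list (map (\<lambda>g. if g < v then g else 0) G) / v"
      by (intro ind_nonneg s0)
    ultimately show "ennreal (indicator {0<..1} v * sum_list (map (\<lambda>g. if g < v then g else 0) (g # G)) / v) =
      ennreal (indicator {0<..1} v * (if g < v then g else 0) / v)
         + ennreal (indicator {0<..1} v * sum_list (map (\<lambda>g. if g < v then g else 0) G) / v)"
      by (simp add: ennreal_plus[symmetric] del: ennreal_plus)
  qed
  also have "\<dots> = (\<integral>\<^sup>+v. ennreal (indicator {0<..1} v * (if g < v then g else 0) / v) \<partial>lborel)
     + (\<integral>\<^sup>+v. ennreal (indicator {0<..1} v * sum_list (map (\<lambda>g. if g < v then g else 0) G) / v) \<partial>lborel)"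
    by (intro nn_integral_add) auto
  also have "\<dots> = ennreal (g * ln (1 / g)) + ennreal (sum_list (map (\<lambda>g. g * ln (1 / g)) G))"
    using Cons by (simp add: Gside_term)
  also have "\<dots> = ennreal (sum_list (map (\<lambda>g. g * ln (1 / g)) (g # G)))"
    using g0 t0 by (simp add: ennreal_plus[symmetric] del: ennreal_plus)
  finally show ?case .
qed

lemma ln_bound: fixes \<rho> r :: real shows "0 < \<rho> \<Longrightarrow> \<rho> < r \<Longrightarrow> \<rho> * (ln r - ln \<rho>) \<le> r / exp 1"
proof -
  assume a: "0 < \<rho>" "\<rho> < r"
  define y where "y = r / \<rho>"
  have "0 < r" using a by linarith
  then have y: "0 < y" using a by (simp add: y_def)
  have "ln (y / exp 1) \<le> y / exp 1 - 1" using y by (intro ln_le_minus_one) auto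
  then have "ln y \<le> y / exp 1" using y by (simp add: ln_div)
  moreover have "ln r - ln \<rho> = ln y" using a by (simp add: y_def ln_div)
  ultimately have "\<rho> * (ln r - ln \<rho>) \<le> \<rho> * (y / exp 1)" using a by (metis mult_left_mono less_imp_le)
  also have "\<dots> = r / exp 1" using a by (simp add: y_def)
  finally show ?thesis .
qed

lemma Lterm:
  fixes r \<rho> :: real assumes "0 \<le> \<rho>"
  shows "(\<integral>\<^sup>+v. ennreal (indicator {0<..1} v * (if \<rho> < v \<and> v \<le> r then \<rho> else 0) / v) \<partial>lborel) \<le> ennreal (max 0 r / exp 1)"
proof (cases "0 < \<rho> \<and> \<rho> < r")
  case True
  have "(\<integral>\<^sup>+v. ennreal (indicator {0<..1} v * (if \<rho> < v \<and> v \<le> r then \<rho> else 0) / v) \<partial>lborel) \<le>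
     (\<integral>\<^sup>+v. ennreal \<rho> * ennreal (indicator {\<rho><..r} v / v) \<partial>lborel)"
    using True by (intro nn_integral_mono) (auto simp: indicator_def ennreal_mult[symmetric])
  also have "\<dots> = ennreal \<rho> * ennreal (ln r - ln \<rho>)"
    using True by (subst nn_integral_cmult) (auto simp: I1)
  also have "\<dots> = ennreal (\<rho> * (ln r - ln \<rho>))"
    using True by (simp add: ennreal_mult[symmetric])
  also have "\<dots> \<le> ennreal (max 0 r / exp 1)"
    using ln_bound[of \<rho> r] True by (intro ennreal_leI) auto
  finally show ?thesis .
next
  case False
  then have "(\<integral>\<^sup>+v. ennreal (indicator {0<..1} v * (if \<rho> < v \<and> v \<le> r then \<rho> else 0) / v) \<partial>lborel) = 0"
  proof -
    have z: "indicator {0<..1} v * (if \<rho> < v \<and> v \<le> r then \<rho> else 0) / v = 0" for v :: real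
      using assms False by auto
    show ?thesis by (simp add: z)
  qed
  then show ?thesis by simp
qed

lemma Lside:
  assumes "\<forall>e\<in>set E. 0 \<le> snd e"
  shows "(\<integral>\<^sup>+v. ennreal (indicator {0<..1} v * Lf E v / v) \<partial>lborel) \<le> ennreal (sum_list (map (\<lambda>e. max 0 (fst e)) E) / exp 1)"
  using assms
proof (induction E)
  case Nil then show ?case by (simp add: Lf_def)
next
  case (Cons e E)
  obtain r \<rho> where e: "e = (r, \<rho>)" by fastforce
  have r0: "0 \<le> \<rho>" using Cons.prems e by auto
  have s0: "0 \<le> sum_list (map (\<lambda>e. max 0 (fst e)) E)" by (intro sum_list_nonneg) auto
  have "(\<integral>\<^sup>+v. ennreal (indicator {0<..1} v * Lf (e # E) v / v) \<partial>lborel)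
    = (\<integral>\<^sup>+v. ennreal (indicator {0<..1} v * (if \<rho> < v \<and> v \<le> r then \<rho> else 0) / v)
         + ennreal (indicator {0<..1} v * Lf E v / v) \<partial>lborel)"
  proof (intro nn_integral_cong)
    fix v :: real
    have "indicator {0<..1} v * Lf (e # E) v / v =
      indicator {0<..1} v * (if \<rho> < v \<and> v \<le> r then \<rho> else 0) / v + indicator {0<..1} v * Lf E v / v"
      by (simp add: e Lf_Cons distrib_left add_divide_distrib)
    moreover have "0 \<le> indicator {0<..1} v * (if \<rho> < v \<and> v \<le> r then \<rho> else 0) / v"
      using r0 by (intro ind_nonneg) auto
    moreover have "0 \<le> indicator {0<..1} v * Lf E v / v"
      using Cons.prems by (intro ind_nonneg Lf_nonneg) auto
    ultimately show "ennreal (indicator {0<..1} v * Lf (e # E) v / v) =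
      ennreal (indicator {0<..1} v * (if \<rho> < v \<and> v \<le> r then \<rho> else 0) / v)
         + ennreal (indicator {0<..1} v * Lf E v / v)"
      by (simp add: ennreal_plus[symmetric] del: ennreal_plus)
  qed
  also have "\<dots> = (\<integral>\<^sup>+v. ennreal (indicator {0<..1} v * (if \<rho> < v \<and> v \<le> r then \<rho> else 0) / v) \<partial>lborel)
     + (\<integral>\<^sup>+v. ennreal (indicator {0<..1} v * Lf E v / v) \<partial>lborel)"
    by (intro nn_integral_add) auto
  also have "\<dots> \<le> ennreal (max 0 r / exp 1) + ennreal (sum_list (map (\<lambda>e. max 0 (fst e)) E) / exp 1)"
    using Cons r0 by (intro add_mono Lterm) auto
  also have "\<dots> = ennreal (sum_list (map (\<lambda>e. max 0 (fst e)) (e # E)) / exp 1)"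
    using s0 by (simp add: e ennreal_plus[symmetric] add_divide_distrib del: ennreal_plus)
  finally show ?case .
qed



lemma sketch_in:
  assumes d: "is_distr p" and x: "0 < x" "x \<le> 1"
  shows "sketch p x \<in> set p"
proof -
  have nn: "\<forall>a\<in>set p. 0 \<le> a" and s1: "sum_list p = 1"
    using d unfolding is_distr_def by auto
  obtain i where i: "i < length p" "sum_list (drop (Suc i) p) < x" "x \<le> sum_list (drop i p)"
    using sketch_exists[of x p] x s1 by auto
  show ?thesis using sketch_eq[OF nn i] i(1) by simp
qed

definition Kf :: "real list \<Rightarrow> real list \<Rightarrow> real \<Rightarrow> real \<Rightarrow> ennreal" where
  "Kf p q x v = ennreal (indicator {0<..1} x * indicator {0<..1} v * (if x \<le> 1 - mm p q v then 1 else 0) / v)"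

lemma mm_bounds:
  assumes "is_distr p" "is_distr q" "0 < v"
  shows "0 \<le> mm p q v" "mm p q v \<le> 1"
proof -
  have "0 \<le> Mv p v" "0 \<le> Mv q v" using assms by (auto intro: Mv_nonneg)
  moreover have "Mv p v \<le> 1" "Mv q v \<le> 1"
    using assms Mv_le_sum[of p v] Mv_le_sum[of q v] unfolding is_distr_def by auto
  ultimately show "0 \<le> mm p q v" "mm p q v \<le> 1" unfolding mm_def by auto
qed

lemma inner_v:
  assumes dp: "is_distr p" and dq: "is_distr q"
  shows "(\<integral>\<^sup>+v. Kf p q x v \<partial>lborel) = ennreal (indicator {0<..1} x * ln (1 / profile {p,q} x))"
proof (cases "0 < x \<and> x \<le> 1")
  case True
  then have x: "0 < x" "x \<le> 1" by auto
  note pp = profile_props[OF dp dq x]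
  have "Kf p q x v = ennreal (indicator {profile {p,q} x<..1} v / v)" for v
  proof (cases "0 < v \<and> v \<le> 1")
    case True
    then show ?thesis using pp(3)[of v] x unfolding Kf_def by (auto simp: indicator_def not_le)
  next
    case False
    then show ?thesis using pp(1) unfolding Kf_def by (auto simp: indicator_def)
  qed
  then have "(\<integral>\<^sup>+v. Kf p q x v \<partial>lborel) = ennreal (ln 1 - ln (profile {p,q} x))"
    using I1[OF pp(1) pp(2)] by simp
  then show ?thesis using x pp(1) by (simp add: ln_div)
next
  case False
  then have "Kf p q x v = 0" for v unfolding Kf_def by (auto simp: indicator_def)
  then show ?thesis using False by (auto simp: indicator_def)
qed

lemma inner_x:
  assumes dp: "is_distr p" and dq: "is_distr q"
  shows "(\<integral>\<^sup>+x. Kf p q x v \<partial>lborel) = ennreal (indicator {0<..1} v * (1 - mm p q v) / v)"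
proof (cases "0 < v \<and> v \<le> 1")
  case True
  note mb = mm_bounds[OF dp dq, of v]
  have "Kf p q x v = ennreal (1 / v) * indicator {0<..1 - mm p q v} x" for x
    using True mb unfolding Kf_def by (auto simp: indicator_def)
  then have "(\<integral>\<^sup>+x. Kf p q x v \<partial>lborel) = ennreal (1 / v) * emeasure lborel {0<..1 - mm p q v}"
    by (simp add: nn_integral_cmult_indicator)
  also have "\<dots> = ennreal (1 / v) * ennreal (1 - mm p q v)"
    using True mb by simp
  also have "\<dots> = ennreal (indicator {0<..1} v * (1 - mm p q v) / v)"
    using True mb by (simp add: ennreal_mult[symmetric])
  finally show ?thesis .
next
  case False
  then have "Kf p q x v = 0" for x unfolding Kf_def by (auto simp: indicator_def)
  then show ?thesis using False by (auto simp: indicator_def)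
qed

lemma meas_Kf: "case_prod (Kf p q) \<in> borel_measurable (lborel \<Otimes>\<^sub>M lborel)"
  using meas_K[of p q] unfolding Kf_def by (simp add: case_prod_beta')

lemma profile_layer:
  assumes dp: "is_distr p" and dq: "is_distr q"
  shows "(\<integral>\<^sup>+x. ennreal (indicator {0<..1} x * ln (1 / profile {p,q} x)) \<partial>lborel)
     = (\<integral>\<^sup>+v. ennreal (indicator {0<..1} v * (1 - mm p q v) / v) \<partial>lborel)"
proof -
  have "(\<integral>\<^sup>+v. (\<integral>\<^sup>+x. Kf p q x v \<partial>lborel) \<partial>lborel) = (\<integral>\<^sup>+x. (\<integral>\<^sup>+v. Kf p q x v \<partial>lborel) \<partial>lborel)"
    by (rule lborel_pair.Fubini'[OF meas_Kf])
  then show ?thesis using inner_v[OF dp dq] inner_x[OF dp dq] by simp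
qed

lemma meas_h:
  assumes dp: "is_distr p" and dq: "is_distr q"
  shows "(\<lambda>x. indicator {0<..1} x * ln (1 / profile {p,q} x)) \<in> borel_measurable borel"
proof -
  have "(\<lambda>x. \<integral>\<^sup>+v. case_prod (Kf p q) (x, v) \<partial>lborel) \<in> borel_measurable lborel"
    by (rule lborel.borel_measurable_nn_integral_fst[OF meas_Kf])
  then have "(\<lambda>x. ennreal (indicator {0<..1} x * ln (1 / profile {p,q} x))) \<in> borel_measurable lborel"
    using inner_v[OF dp dq] by simp
  moreover have "0 \<le> indicator {0<..1} x * ln (1 / profile {p,q} x)" for x
    using profile_props[OF dp dq, of x] by (auto simp: indicator_def)
  ultimately have "(\<lambda>x. indicator {0<..1} x * ln (1 / profile {p,q} x)) \<in> borel_measurable lborel"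
    by simp
  then show ?thesis by (simp add: measurable_lborel1)
qed

lemma h_finite:
  assumes dp: "is_distr p" and dq: "is_distr q"
  shows "(\<integral>\<^sup>+x. ennreal (indicator {0<..1} x * ln (1 / profile {p,q} x)) \<partial>lborel) < top"
proof -
  define Pos where "Pos = insert 1 {a \<in> set p \<union> set q. 0 < a}"
  define c where "c = Min Pos"
  have fin: "finite Pos" unfolding Pos_def by auto
  have c0: "0 < c" unfolding c_def using fin by (subst Min_gr_iff) (auto simp: Pos_def)
  have b: "indicator {0<..1} x * ln (1 / profile {p,q} x) \<le> indicator {0<..1} x * ln (1 / c)" for x
  proof (cases "0 < x \<and> x \<le> 1")
    case True
    then have x: "0 < x" "x \<le> 1" by auto
    have pr: "profile {p,q} x = min (sketch p x) (sketch q x)"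
      unfolding profile_def by (cases "p = q") auto
    have "profile {p,q} x \<in> Pos"
      using pr sketch_in[OF dp x] sketch_in[OF dq x] profile_props(1)[OF dp dq x]
      unfolding Pos_def by (auto simp: min_def)
    then have "c \<le> profile {p,q} x" unfolding c_def using fin by auto
    then show ?thesis using x c0 profile_props(1)[OF dp dq x] by (simp add: ln_div)
  qed (auto simp: indicator_def)
  have "(\<integral>\<^sup>+x. ennreal (indicator {0<..1} x * ln (1 / profile {p,q} x)) \<partial>lborel)
      \<le> (\<integral>\<^sup>+x. ennreal (indicator {0<..1} (x::real) * ln (1 / c)) \<partial>lborel)"
    by (intro nn_integral_mono ennreal_leI b)
  also have "\<dots> = (\<integral>\<^sup>+x. ennreal (ln (1 / c)) * indicator {0<..1} (x::real) \<partial>lborel)"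
    by (intro nn_integral_cong) (simp split: split_indicator)
  also have "\<dots> = ennreal (ln (1 / c))"
    by (simp add: nn_integral_cmult_indicator)
  finally have "(\<integral>\<^sup>+x. ennreal (indicator {0<..1} x * ln (1 / profile {p,q} x)) \<partial>lborel) \<le> ennreal (ln (1 / c))" .
  then show ?thesis using ennreal_less_top[of "ln (1 / c)"] by (rule le_less_trans)
qed



lemma lt_sum_Mv: "sum_list (map (\<lambda>g. if g < v then g else 0) G) + Mv G v = sum_list (G::real list)"
  by (induction G) (auto simp: Mv_Cons Mv_def)

lemma entropy_ln: "entropy G = sum_list (map (\<lambda>g. g * ln (1 / g)) G) / ln 2"
  unfolding entropy_def by (induction G) (auto simp: log_def add_divide_distrib)

lemma sum_max_fst: fixes E :: "(real \<times> real) list" shows "\<forall>g\<in>set (map fst E). 0 < g \<Longrightarrow> sum_list (map (\<lambda>e. max 0 (fst e)) E) = sum_list (map fst E)"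
  by (induction E) (auto simp: max_absorb2 less_imp_le)

theorem theorem2:
  fixes p q :: "real list" and G :: "real list"
  assumes "is_distr p" and "is_distr q"
    and "greedy [p, q] G"
  shows "entropy G \<le> profile_entropy {p, q} + log 2 (exp 1) / exp 1"
proof -
  note dp = assms(1) and dq = assms(2)
  have nnp: "\<forall>a\<in>set p. 0 \<le> a" and sp: "sum_list p = 1" using dp unfolding is_distr_def by auto
  have nnq: "\<forall>a\<in>set q. 0 \<le> a" and sq: "sum_list q = 1" using dq unfolding is_distr_def by auto
  have ne: "p \<noteq> []" "q \<noteq> []" using sp sq by auto
  have gs: "sum_list G = 1" "\<forall>g\<in>set G. 0 < g \<and> g \<le> 1"
    using greedy_sum[OF assms(3) refl ne nnp nnq] sp sq by auto
  obtain E where E: "map fst E = G" "\<forall>e\<in>set E. 0 \<le> snd e"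
    "\<forall>v>0. min (Mv p v) (Mv q v) \<le> Mv G v + Lf E v"
    using greedy_level[OF assms(3) refl ne nnp nnq] by blast
  define Hl where "Hl = sum_list (map (\<lambda>g. g * ln (1 / g)) G)"
  define h where "h = (\<lambda>x. indicator {0<..1} x * ln (1 / profile {p,q} x))"
  have h0: "0 \<le> h x" for x
    using profile_props[OF dp dq, of x] unfolding h_def by (auto simp: indicator_def)
  have fin: "(\<integral>\<^sup>+x. ennreal (h x) \<partial>lborel) < top"
    using h_finite[OF dp dq] unfolding h_def .
  obtain R where R: "(\<integral>\<^sup>+x. ennreal (h x) \<partial>lborel) = ennreal R" "0 \<le> R"
  proof (cases "(\<integral>\<^sup>+x. ennreal (h x) \<partial>lborel)" rule: ennreal_cases)
    case (real r) then show ?thesis using that by blast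
  next
    case top then show ?thesis using fin by simp
  qed
  have pw: "ennreal (indicator {0<..1} v * sum_list (map (\<lambda>g. if g < v then g else 0) G) / v)
      \<le> ennreal (indicator {0<..1} v * (1 - mm p q v) / v) + ennreal (indicator {0<..1} v * Lf E v / v)" for v
  proof (cases "0 < v \<and> v \<le> 1")
    case True
    have a: "sum_list (map (\<lambda>g. if g < v then g else 0) G) \<le> (1 - mm p q v) + Lf E v"
    proof -
      have "min (Mv p v) (Mv q v) \<le> Mv G v + Lf E v" using E(3) True by blast
      then show ?thesis using lt_sum_Mv[of v G] gs(1) unfolding mm_def by linarith
    qed
    have b: "0 \<le> 1 - mm p q v" using mm_bounds[OF dp dq, of v] True by auto
    have c: "0 \<le> Lf E v" using Lf_nonneg E(2) by blast
    have "indicator {0<..1} v * sum_list (map (\<lambda>g. if g < v then g else 0) G) / v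
        \<le> indicator {0<..1} v * (1 - mm p q v) / v + indicator {0<..1} v * Lf E v / v"
      using a True by (simp add: divide_right_mono add_divide_distrib[symmetric])
    then have "ennreal (indicator {0<..1} v * sum_list (map (\<lambda>g. if g < v then g else 0) G) / v)
      \<le> ennreal (indicator {0<..1} v * (1 - mm p q v) / v + indicator {0<..1} v * Lf E v / v)"
      by (rule ennreal_leI)
    also have "\<dots> = ennreal (indicator {0<..1} v * (1 - mm p q v) / v) + ennreal (indicator {0<..1} v * Lf E v / v)"
      using b c True by (simp add: ennreal_plus[symmetric] del: ennreal_plus)
    finally show ?thesis .
  next
    case False
    then show ?thesis by (auto simp: indicator_def)
  qed
  have "ennreal Hl = (\<integral>\<^sup>+v. ennreal (indicator {0<..1} v * sum_list (map (\<lambda>g. if g < v then g else 0) G) / v) \<partial>lborel)"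
    unfolding Hl_def using Gside[OF gs(2)] by simp
  also have "\<dots> \<le> (\<integral>\<^sup>+v. ennreal (indicator {0<..1} v * (1 - mm p q v) / v) + ennreal (indicator {0<..1} v * Lf E v / v) \<partial>lborel)"
    by (intro nn_integral_mono pw)
  also have "\<dots> = (\<integral>\<^sup>+v. ennreal (indicator {0<..1} v * (1 - mm p q v) / v) \<partial>lborel) + (\<integral>\<^sup>+v. ennreal (indicator {0<..1} v * Lf E v / v) \<partial>lborel)"
    by (intro nn_integral_add) auto
  also have "\<dots> \<le> ennreal R + ennreal (1 / exp 1)"
  proof (intro add_mono)
    show "(\<integral>\<^sup>+v. ennreal (indicator {0<..1} v * (1 - mm p q v) / v) \<partial>lborel) \<le> ennreal R"
      using profile_layer[OF dp dq] R(1) unfolding h_def by simp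
    have "sum_list (map (\<lambda>e. max 0 (fst e)) E) = 1"
      using sum_max_fst[of E] E(1) gs by auto
    then show "(\<integral>\<^sup>+v. ennreal (indicator {0<..1} v * Lf E v / v) \<partial>lborel) \<le> ennreal (1 / exp 1)"
      using Lside[OF E(2)] by simp
  qed
  also have "\<dots> = ennreal (R + 1 / exp 1)" using R(2) by (simp add: ennreal_plus[symmetric] del: ennreal_plus)
  finally have "ennreal Hl \<le> ennreal (R + 1 / exp 1)" .
  moreover have "0 \<le> R + 1 / exp 1" using R(2) by (simp add: add_nonneg_nonneg)
  ultimately have HlR: "Hl \<le> R + 1 / exp 1" using ennreal_le_iff by blast
  have "(h has_integral R) UNIV"
    using nn_integral_has_integral[OF meas_h[OF dp dq, folded h_def] h0 R(1) R(2)] .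
  then have "((\<lambda>x. if x \<in> {0<..1} then ln (1 / profile {p,q} x) else 0) has_integral R) UNIV"
    by (rule has_integral_eq[rotated]) (simp add: h_def indicator_def)
  then have hI: "((\<lambda>x. ln (1 / profile {p,q} x)) has_integral R) {0<..1}"
    by (rule has_integral_restrict_UNIV[THEN iffD1])
  have n1: "negligible {x \<in> {0<..1} - {0..1}. ln (1 / profile {p,q} x) \<noteq> (0::real)}"
    by (rule negligible_subset[of "{}"]) auto
  have n2: "negligible {x \<in> {0..1} - {0<..1}. ln (1 / profile {p,q} x) \<noteq> (0::real)}"
    by (rule negligible_subset[of "{0}"]) auto
  have "((\<lambda>x. ln (1 / profile {p,q} x)) has_integral R) {0..1}"
    using has_integral_spike_set_eq[OF n1 n2] hI by blast
  then have "((\<lambda>x. ln (1 / profile {p,q} x) / ln 2) has_integral R / ln 2) {0..1}"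
    by (rule has_integral_divide)
  then have PE: "profile_entropy {p,q} = R / ln 2"
    unfolding profile_entropy_def log_def by (rule integral_unique)
  have "entropy G = Hl / ln 2" unfolding Hl_def by (rule entropy_ln)
  also have "\<dots> \<le> (R + 1 / exp 1) / ln 2" using HlR by (simp add: divide_right_mono)
  also have "\<dots> = profile_entropy {p, q} + log 2 (exp 1) / exp 1"
    by (simp add: PE log_def add_divide_distrib)
  finally show ?thesis .
qed


end
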